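(* Let $n\ge 2$ and $\gamma_1,\dots,\gamma_n>0$. For $i=1,\dots,n$ let $H_i$ be a system $\dot x_i=f_i(x_i,u_i)$, $y_i=h_i(x_i)$ with $x_i\in\mathbb{R}^{m_i}$, $u_i,y_i\in\mathbb{R}$, and suppose there is a $C^1$ function $V_i:\mathbb{R}^{m_i}\to\mathbb{R}$ with $$\nabla V_i(x_i)\cdot f_i(x_i,u_i)\le -h_i(x_i)^2+\gamma_i\,u_i\,h_i(x_i)\quad\text{for all }x_i\in\mathbb{R}^{m_i},\ u_i\in\mathbb{R}.$$ Consider the closed-loop (cyclic feedback) interconnection $u_1=-y_n$, $u_i=y_{i-1}$ for $i=2,\dots,n$, and write $y=(y_1,\dots,y_n)$. If $\cos(\pi/n)(\gamma_1\cdots\gamma_n)^{1/n}<1$ (i.e. $\gamma_1\cdots\gamma_n<\sec(\pi/n)^n$ when $n\ge3$), then there exist $d_1,\dots,d_n>0$ and $\epsilon>0$ such that $V=\sum_{i=1}^n d_iV_i$ satisfies, along the closed-loop dynamics, $$\dot V=\sum_{i=1}^n d_i\dot V_i\le -\epsilon|y|^2$$ at every state $(x_1,\dots,x_n)$.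
   Context: Here $\dot V_i$ denotes $\nabla V_i(x_i)\cdot f_i(x_i,u_i)$ evaluated with the interconnection inputs. The inequality on $V_i$ is the output feedback passivity (output strict passivity) property with gain $\gamma_i$. *)

theory Defs
  imports "HOL-Analysis.Analysis"
begin

text \<open>The state space R^{m_i} of subsystem i is represented as a linear subspace S
  of an ambient Euclidean space (any finite family of spaces R^{m_i} embeds in a common
  one).\<close>
definition C1_with_gradient_on :: "'a::euclidean_space set \<Rightarrow> ('a \<Rightarrow> real) \<Rightarrow> ('a \<Rightarrow> 'a) \<Rightarrow> bool" where
  "C1_with_gradient_on S V G \<longleftrightarrow>
     (\<forall>x\<in>S. (V has_derivative (\<lambda>v. G x \<bullet> v)) (at x within S)) \<and> continuous_on S G"

definition cyclic_input :: "nat \<Rightarrow> (nat \<Rightarrow> 'a \<Rightarrow> real) \<Rightarrow> (nat \<Rightarrow> 'a) \<Rightarrow> nat \<Rightarrow> real" where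
  "cyclic_input n h x i = (if i = 1 then - h n (x n) else h (i - 1) (x (i - 1)))"

end

theory Submission
  imports Defs
begin

lemma alg_step:
  fixes A B D c P Q s x y w :: real
  assumes "B > 0" "D > 0" "A + D = 2*c*B" "P*D - Q*B = s"
  shows "(D*x - B*y + s*w)^2/(2*B*D) = c*x^2 - A/(2*B)*x^2 + B/(2*D)*y^2 - x*y
          + s*w*(x/B - y/D) + (s/2)*w^2*(P/B - Q/D)"
proof -
  have a: "A = 2*c*B - D" using assms by (simp add: field_simps)
  have p: "P/B - Q/D = s/(B*D)" using assms by (simp add: field_simps)
  show ?thesis unfolding p a using assms(1,2) by (simp add: field_simps power2_eq_square)
qed

lemma sin_rec: "sin (real (k+2) * a) + sin (real k * a) = 2 * cos a * sin (real (k+1) * a)"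
proof -
  have 1: "real (k+2) * a = real (k+1) * a + a" by (simp add: algebra_simps)
  have 2: "real k * a = real (k+1) * a - a" by (simp add: algebra_simps)
  show ?thesis unfolding 1 2 by (simp add: sin_add sin_diff)
qed

lemma cot_rec: "cos (real (k+1) * a) * sin (real (k+2) * a) - cos (real (k+2) * a) * sin (real (k+1) * a) = sin a"
proof -
  have e: "real (k+2) * a - real (k+1) * a = a" by (simp add: algebra_simps)
  have "sin a = sin (real (k+2) * a) * cos (real (k+1) * a) - cos (real (k+2) * a) * sin (real (k+1) * a)"
    using sin_diff[of "real (k+2) * a" "real (k+1) * a"] unfolding e .
  then show ?thesis by (simp only: mult.commute)
qed

lemma sos_prefix:
  fixes z :: "nat \<Rightarrow> real" and n :: nat
  assumes \<theta>_def: "\<theta> = pi / real n"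
  and t_def: "t = (\<lambda>k::nat. sin (real k * \<theta>))"
  and C_def: "C = (\<lambda>k::nat. cos (real k * \<theta>))"
  and \<sigma>_def: "\<sigma> = sin \<theta>" and c_def: "c = cos \<theta>"
  shows "k + 1 < n \<Longrightarrow> (\<Sum>i\<in>{1..<k+1}. (t (i+1) * z i - t i * z (i+1) + \<sigma> * z n)^2 / (2 * t i * t (i+1)))
     = c * (\<Sum>i\<in>{1..<k+1}. (z i)^2) + t k / (2 * t (k+1)) * (z (k+1))^2
       - (\<Sum>i\<in>{1..<k+1}. z i * z (i+1)) + \<sigma> * z n * (z 1 / t 1 - z (k+1) / t (k+1))
       + (\<sigma>/2) * (z n)^2 * (C 1 / t 1 - C (k+1) / t (k+1))"
proof (induction k)
  case 0
  then show ?case by (simp add: t_def)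
next
  case (Suc k)
  have tpos: "\<And>j. 0 < j \<Longrightarrow> j < n \<Longrightarrow> t j > 0"
    unfolding t_def \<theta>_def
  proof -
    fix j assume j: "0 < j" "j < n"
    have "real j * (pi / real n) < pi" using j by (simp add: field_simps)
    moreover have "0 < real j * (pi / real n)" using j by simp
    ultimately show "sin (real j * (pi / real n)) > 0" by (intro sin_gt_zero) auto
  qed
  have B: "t (k+1) > 0" "t (k+2) > 0" using Suc.prems by (auto intro: tpos)
  have r1: "t k + t (k+2) = 2 * c * t (k+1)" unfolding t_def c_def using sin_rec[of k \<theta>] by simp
  have r2: "C (k+1) * t (k+2) - C (k+2) * t (k+1) = \<sigma>" unfolding t_def C_def \<sigma>_def using cot_rec[of k \<theta>] by simp
  have step: "(t (k+2) * z (k+1) - t (k+1) * z (k+2) + \<sigma> * z n)^2 / (2 * t (k+1) * t (k+2))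
     = c*(z (k+1))^2 - t k/(2*t (k+1))*(z (k+1))^2 + t (k+1)/(2*t (k+2))*(z (k+2))^2 - z (k+1) * z (k+2)
          + \<sigma>*z n*(z (k+1)/t (k+1) - z (k+2)/t (k+2)) + (\<sigma>/2)*(z n)^2*(C (k+1)/t (k+1) - C (k+2)/t (k+2))"
    by (rule alg_step[OF B r1 r2])
  have IH: "(\<Sum>i\<in>{1..<k+1}. (t (i+1) * z i - t i * z (i+1) + \<sigma> * z n)^2 / (2 * t i * t (i+1)))
     = c * (\<Sum>i\<in>{1..<k+1}. (z i)^2) + t k / (2 * t (k+1)) * (z (k+1))^2
       - (\<Sum>i\<in>{1..<k+1}. z i * z (i+1)) + \<sigma> * z n * (z 1 / t 1 - z (k+1) / t (k+1))
       + (\<sigma>/2) * (z n)^2 * (C 1 / t 1 - C (k+1) / t (k+1))" using Suc by simp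
  show ?case
    using IH step by (simp add: sum.atLeastLessThan_Suc algebra_simps add_divide_distrib diff_divide_distrib)
qed

lemma anti_cyclic:
  fixes z :: "nat \<Rightarrow> real" and n :: nat
  assumes n2: "n \<ge> 2"
  shows "(\<Sum>i\<in>{1..<n}. z i * z (i+1)) - z 1 * z n \<le> cos (pi / real n) * (\<Sum>i\<in>{1..n}. (z i)^2)"
proof -
  define \<theta> where "\<theta> = pi / real n"
  define t where "t = (\<lambda>k::nat. sin (real k * \<theta>))"
  define C where "C = (\<lambda>k::nat. cos (real k * \<theta>))"
  define \<sigma> where "\<sigma> = sin \<theta>"
  define c where "c = cos \<theta>"
  obtain m where m: "n = m + 2" using n2 by (metis add.commute le_Suc_ex)
  have tpos: "\<And>j. 0 < j \<Longrightarrow> j < n \<Longrightarrow> t j > 0"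
    unfolding t_def \<theta>_def
  proof -
    fix j assume j: "0 < j" "j < n"
    have "real j * (pi / real n) < pi" using j by (simp add: field_simps)
    moreover have "0 < real j * (pi / real n)" using j by simp
    ultimately show "sin (real j * (pi / real n)) > 0" by (intro sin_gt_zero) auto
  qed
  have key: "(\<Sum>i\<in>{1..<m+1}. (t (i+1) * z i - t i * z (i+1) + \<sigma> * z n)^2 / (2 * t i * t (i+1)))
     = c * (\<Sum>i\<in>{1..<m+1}. (z i)^2) + t m / (2 * t (m+1)) * (z (m+1))^2
       - (\<Sum>i\<in>{1..<m+1}. z i * z (i+1)) + \<sigma> * z n * (z 1 / t 1 - z (m+1) / t (m+1))
       + (\<sigma>/2) * (z n)^2 * (C 1 / t 1 - C (m+1) / t (m+1))"
    by (rule sos_prefix[OF \<theta>_def t_def C_def \<sigma>_def c_def]) (simp add: m)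
  have nn: "0 \<le> (\<Sum>i\<in>{1..<m+1}. (t (i+1) * z i - t i * z (i+1) + \<sigma> * z n)^2 / (2 * t i * t (i+1)))"
  proof (rule sum_nonneg)
    fix i assume i: "i \<in> {1..<m+1}"
    have "t i > 0" "t (i+1) > 0" using i m by (auto intro!: tpos)
    then show "0 \<le> (t (i+1) * z i - t i * z (i+1) + \<sigma> * z n)^2 / (2 * t i * t (i+1))" by simp
  qed
  have npos: "real n > 0" using n2 by simp
  have e1: "real (m+1) * \<theta> = pi - \<theta>" unfolding \<theta>_def m using npos m by (simp add: field_simps)
  have e2: "real (m+2) * \<theta> = pi" unfolding \<theta>_def m using npos m by (simp add: field_simps)
  have t1: "t 1 = \<sigma>" "C 1 = c" unfolding t_def C_def \<sigma>_def c_def by simp_all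
  have tm1: "t (m+1) = \<sigma>" "C (m+1) = - c" unfolding t_def C_def \<sigma>_def c_def e1 by simp_all
  have tm2: "t (m+2) = 0" unfolding t_def e2 by simp
  have sp: "\<sigma> > 0" using tpos[of 1] t1 m by simp
  have rec: "t (m+2) + t m = 2 * c * t (m+1)" unfolding t_def c_def using sin_rec[of m \<theta>] by simp
  have tmc: "t m / (2 * t (m+1)) = c" using rec tm1 tm2 sp by (simp add: field_simps)
  have A: "\<sigma> * z n * (z 1 / t 1 - z (m+1) / t (m+1)) = z 1 * z n - z (m+1) * z n"
    using t1 tm1 sp by (simp add: field_simps)
  have B: "(\<sigma>/2) * (z n)^2 * (C 1 / t 1 - C (m+1) / t (m+1)) = c * (z n)^2"
    using t1 tm1 sp by (simp add: field_simps)
  have s1: "\<And>f::nat\<Rightarrow>real. sum f {1..<Suc(Suc(m+1))} = sum f {1..<Suc(m+1)} + f (Suc (m+1))"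
    by (rule sum.atLeastLessThan_Suc) simp
  have s2: "\<And>f::nat\<Rightarrow>real. sum f {1..<Suc(m+1)} = sum f {1..<m+1} + f (m+1)"
    by (rule sum.atLeastLessThan_Suc) simp
  have e3: "{1..n} = {1..<Suc(Suc(m+1))}" "{1..<n} = {1..<Suc(m+1)}" "Suc (m+1) = n" using m by auto
  have Q: "(\<Sum>i\<in>{1..n}. (z i)^2) = (\<Sum>i\<in>{1..<m+1}. (z i)^2) + (z (m+1))^2 + (z n)^2"
    unfolding e3(1) unfolding s1 unfolding s2 unfolding e3(3) ..
  have P: "(\<Sum>i\<in>{1..<n}. z i * z (i+1)) = (\<Sum>i\<in>{1..<m+1}. z i * z (i+1)) + z (m+1) * z n"
    unfolding e3(2) s2 using e3(3) by simp
  have T: "t m / (2 * t (m+1)) * (z (m+1))^2 = c * (z (m+1))^2" using tmc by simp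
  have cQ: "c * (\<Sum>i\<in>{1..n}. (z i)^2) = c * (\<Sum>i\<in>{1..<m+1}. (z i)^2) + c * (z (m+1))^2 + c * (z n)^2"
    unfolding Q by (simp add: algebra_simps)
  have "(\<Sum>i\<in>{1..<n}. z i * z (i+1)) - z 1 * z n \<le> c * (\<Sum>i\<in>{1..n}. (z i)^2)"
    using key nn unfolding cQ P A B T by linarith
  then show ?thesis unfolding c_def \<theta>_def .
qed

theorem corollary1:
  fixes n :: nat
    and \<gamma> :: "nat \<Rightarrow> real"
    and S :: "nat \<Rightarrow> 'a::euclidean_space set"
    and f :: "nat \<Rightarrow> 'a \<Rightarrow> real \<Rightarrow> 'a"
    and h :: "nat \<Rightarrow> 'a \<Rightarrow> real"
    and V :: "nat \<Rightarrow> 'a \<Rightarrow> real"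
    and G :: "nat \<Rightarrow> 'a \<Rightarrow> 'a"
  assumes n2: "n \<ge> 2"
    and gpos: "\<forall>i\<in>{1..n}. \<gamma> i > 0"
    and sub: "\<forall>i\<in>{1..n}. subspace (S i)"
    and fS: "\<forall>i\<in>{1..n}. \<forall>x\<in>S i. \<forall>u. f i x u \<in> S i"
    and C1: "\<forall>i\<in>{1..n}. C1_with_gradient_on (S i) (V i) (G i)"
    and diss: "\<forall>i\<in>{1..n}. \<forall>x\<in>S i. \<forall>u::real.
                 (G i x \<bullet> f i x u) \<le> - ((h i x)^2) + \<gamma> i * u * h i x"
    and sec: "cos (pi / real n) * (\<Prod>i\<in>{1..n}. \<gamma> i) powr (1 / real n) < 1"
  shows "\<exists>d::nat \<Rightarrow> real. \<exists>\<epsilon>::real. (\<forall>i\<in>{1..n}. d i > 0) \<and> \<epsilon> > 0 \<and>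
           (\<forall>x::nat \<Rightarrow> 'a. (\<forall>i\<in>{1..n}. x i \<in> S i) \<longrightarrow>
              (\<Sum>i\<in>{1..n}. d i * (G i (x i) \<bullet> f i (x i) (cyclic_input n h x i)))
                \<le> - \<epsilon> * (\<Sum>i\<in>{1..n}. (h i (x i))^2))"
proof -
  define P where "P = (\<Prod>i\<in>{1..n}. \<gamma> i)"
  have Ppos: "P > 0" unfolding P_def using gpos by (intro prod_pos) auto
  define gb where "gb = P powr (1 / real n)"
  have gbpos: "gb > 0" unfolding gb_def using Ppos by simp
  have npos: "real n > 0" using n2 by simp
  have gbn: "gb ^ n = P"
  proof -
    have "gb ^ n = gb powr real n" using gbpos by (simp add: powr_realpow)
    also have "\<dots> = P powr (1 / real n * real n)" unfolding gb_def by (simp add: powr_powr)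
    also have "\<dots> = P" using npos Ppos by simp
    finally show ?thesis .
  qed
  define c where "c = cos (pi / real n)"
  define \<rho> where "\<rho> = c * gb"
  have rho1: "\<rho> < 1" using sec unfolding \<rho>_def c_def gb_def P_def .
  define e where "e = (\<lambda>i. \<Prod>j\<in>{1..i}. gb / \<gamma> j)"
  have e0: "e 0 = 1" unfolding e_def by simp
  have eSuc: "\<And>i. e (Suc i) = e i * (gb / \<gamma> (Suc i))" unfolding e_def by simp
  have epos: "\<And>i. i \<le> n \<Longrightarrow> e i > 0"
    unfolding e_def using gpos gbpos by (intro prod_pos) (auto intro!: divide_pos_pos)
  have en: "e n = 1"
  proof -
    have "e n = (\<Prod>j\<in>{1..n}. gb) / P" unfolding e_def P_def by (rule prod_dividef)
    also have "\<dots> = 1" using gbn Ppos by simp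
    finally show ?thesis .
  qed
  define d where "d = (\<lambda>i. (e i)^2)"
  have dpos: "\<forall>i\<in>{1..n}. d i > 0"
  proof
    fix i assume "i \<in> {1..n}"
    then have "e i > 0" using epos by auto
    then show "d i > 0" unfolding d_def by simp
  qed
  define M where "M = Min (d ` {1..n})"
  have Mpos: "M > 0" unfolding M_def using dpos n2 by (subst Min_gr_iff) auto
  have Mle: "\<And>i. i \<in> {1..n} \<Longrightarrow> M \<le> d i" unfolding M_def by (rule Min_le) auto
  define \<epsilon> where "\<epsilon> = (1 - \<rho>) * M"
  have epspos: "\<epsilon> > 0" unfolding \<epsilon>_def using rho1 Mpos by simp
  show ?thesis
  proof (intro exI conjI allI impI)
    show "\<forall>i\<in>{1..n}. d i > 0" by (rule dpos)
    show "\<epsilon> > 0" by (rule epspos)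
    fix x :: "nat \<Rightarrow> 'a"
    assume xS: "\<forall>i\<in>{1..n}. x i \<in> S i"
    define y where "y = (\<lambda>i. h i (x i))"
    define z where "z = (\<lambda>i. e i * y i)"
    define w where "w = (\<lambda>i. if i = 1 then - (z 1 * z n) else z (i - 1) * z i)"
    have s1: "(\<Sum>i\<in>{1..n}. d i * (G i (x i) \<bullet> f i (x i) (cyclic_input n h x i)))
        \<le> (\<Sum>i\<in>{1..n}. d i * (- ((y i)^2) + \<gamma> i * cyclic_input n h x i * y i))"
      unfolding y_def using dpos xS diss by (intro sum_mono mult_left_mono) (auto simp: less_imp_le)
    have s2: "\<And>i. i \<in> {1..n} \<Longrightarrow> d i * (- ((y i)^2) + \<gamma> i * cyclic_input n h x i * y i) = - ((z i)^2) + gb * w i"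
    proof -
      fix i assume i: "i \<in> {1..n}"
      show "d i * (- ((y i)^2) + \<gamma> i * cyclic_input n h x i * y i) = - ((z i)^2) + gb * w i"
      proof (cases "i = 1")
        case True
        have e1: "e 1 = gb / \<gamma> 1" using eSuc[of 0] e0 by simp
        have g1: "\<gamma> 1 > 0" using gpos n2 by auto
        show ?thesis using True e1 g1 en
          unfolding d_def w_def z_def cyclic_input_def y_def by (simp add: field_simps power2_eq_square)
      next
        case False
        then obtain k where k: "i = Suc k" "k \<ge> 1" using i by (cases i) auto
        have ei: "e i = e k * (gb / \<gamma> i)" using eSuc k by simp
        have gi: "\<gamma> i > 0" using gpos i by auto
        show ?thesis using False ei gi k
          unfolding d_def w_def z_def cyclic_input_def y_def by (simp add: field_simps power2_eq_square)
      qed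
    qed
    have s3: "(\<Sum>i\<in>{1..n}. w i) = (\<Sum>i\<in>{1..<n}. z i * z (i+1)) - z 1 * z n"
    proof -
      obtain m where m: "n = Suc m" using n2 by (cases n) auto
      have "{1..n} = insert 1 {Suc 1..Suc m}" using m n2 by auto
      then have "(\<Sum>i\<in>{1..n}. w i) = w 1 + (\<Sum>i\<in>{Suc 1..Suc m}. w i)" by simp
      also have "(\<Sum>i\<in>{Suc 1..Suc m}. w i) = (\<Sum>i\<in>{1..m}. w (Suc i))" by (rule sum.shift_bounds_cl_Suc_ivl)
      also have "\<dots> = (\<Sum>i\<in>{1..<n}. z i * z (i+1))"
        using m by (intro sum.cong) (auto simp: w_def)
      finally show ?thesis by (simp add: w_def)
    qed
    have ac: "(\<Sum>i\<in>{1..<n}. z i * z (i+1)) - z 1 * z n \<le> c * (\<Sum>i\<in>{1..n}. (z i)^2)"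
      unfolding c_def by (rule anti_cyclic[OF n2])
    have s4: "(\<Sum>i\<in>{1..n}. d i * (- ((y i)^2) + \<gamma> i * cyclic_input n h x i * y i))
        = - (\<Sum>i\<in>{1..n}. (z i)^2) + gb * (\<Sum>i\<in>{1..n}. w i)"
      using s2 by (simp add: sum.distrib sum_distrib_left sum_negf sum_subtractf)
    have Z: "(\<Sum>i\<in>{1..n}. (z i)^2) = (\<Sum>i\<in>{1..n}. d i * (y i)^2)"
      unfolding z_def d_def by (simp add: power_mult_distrib)
    have Zge: "M * (\<Sum>i\<in>{1..n}. (y i)^2) \<le> (\<Sum>i\<in>{1..n}. (z i)^2)"
      unfolding Z sum_distrib_left by (intro sum_mono mult_right_mono Mle) auto
    have "gb * (\<Sum>i\<in>{1..n}. w i) \<le> gb * (c * (\<Sum>i\<in>{1..n}. (z i)^2))"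
      unfolding s3 using ac gbpos by (intro mult_left_mono) auto
    then have "(\<Sum>i\<in>{1..n}. d i * (- ((y i)^2) + \<gamma> i * cyclic_input n h x i * y i))
        \<le> - (1 - \<rho>) * (\<Sum>i\<in>{1..n}. (z i)^2)"
      unfolding s4 \<rho>_def by (simp add: algebra_simps)
    also have "\<dots> \<le> - (1 - \<rho>) * (M * (\<Sum>i\<in>{1..n}. (y i)^2))"
      using Zge rho1 by (simp add: mult_left_mono)
    finally show "(\<Sum>i\<in>{1..n}. d i * (G i (x i) \<bullet> f i (x i) (cyclic_input n h x i)))
                \<le> - \<epsilon> * (\<Sum>i\<in>{1..n}. (h i (x i))^2)"
      using s1 unfolding \<epsilon>_def y_def by (simp add: algebra_simps)
  qed
qed

end
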